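(* Let $\mu,\delta,\lambda$ satisfy $\mu\ge\delta>0$ and $\lambda>-\frac{\mu(\mu+3\delta)}{\mu+2\delta}$, and let $$\beta=\min\Big\{\delta,\ \tfrac12\Big(4\mu+\delta+3\lambda-\sqrt{12\mu^2+\delta^2+9\lambda^2-4\mu\delta+20\mu\lambda-2\lambda\delta}\Big)\Big\}>0.$$ Then for every differentiable vector field $\mathbf u:\mathbb{R}^3\supset U\to\mathbb{R}^3$ it holds pointwise $$\beta|\nabla_y\mathbf u|^2\le \mu|\nabla_x\mathbf u|^2+\delta|\partial_z\mathbf u|^2+(\mu+\lambda)|\operatorname{div}_y\mathbf u|^2 .$$
   Context: Points of $\mathbb{R}^3$ are written $y=(x,z)$, $x\in\mathbb{R}^2$, $z\in\mathbb{R}$. $\nabla_x\mathbf u$ is the $3\times2$ matrix of derivatives $\partial_{x_i}u_j$ ($i=1,2$, $j=1,2,3$), $\partial_z\mathbf u$ the vector of $z$-derivatives of the components, $\nabla_y\mathbf u$ the full $3\times3$ Jacobian, $|\cdot|$ Euclidean/Frobenius norms. *)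

theory Defs
  imports "HOL-Analysis.Analysis"
begin

text \<open>Points of R^3 are y = (x,z) with x = (y$1, y$2) and z = y$3.
  For u :: real^3 \<Rightarrow> real^3, (jacobian u (at y)) $ j $ i is the partial
  derivative of the j-th component u_j with respect to the i-th coordinate.\<close>

definition grad_y_sq :: "(real^3 \<Rightarrow> real^3) \<Rightarrow> real^3 \<Rightarrow> real" where
  "grad_y_sq u y = (\<Sum>i\<in>UNIV. \<Sum>j\<in>UNIV. (jacobian u (at y) $ j $ i)^2)"

definition grad_x_sq :: "(real^3 \<Rightarrow> real^3) \<Rightarrow> real^3 \<Rightarrow> real" where
  "grad_x_sq u y = (\<Sum>i\<in>{1, 2::3}. \<Sum>j\<in>UNIV. (jacobian u (at y) $ j $ i)^2)"

definition dz_sq :: "(real^3 \<Rightarrow> real^3) \<Rightarrow> real^3 \<Rightarrow> real" where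
  "dz_sq u y = (\<Sum>j\<in>UNIV. (jacobian u (at y) $ j $ (3::3))^2)"

definition div_y :: "(real^3 \<Rightarrow> real^3) \<Rightarrow> real^3 \<Rightarrow> real" where
  "div_y u y = trace (jacobian u (at y))"

end

theory Submission
  imports Defs
begin

lemma beta_facts:
  fixes mu delta lam :: real
  assumes "mu \<ge> delta" and "delta > 0"
    and "lam > - (mu * (mu + 3 * delta) / (mu + 2 * delta))"
  defines "T \<equiv> 4 * mu + delta + 3 * lam"
    and "D \<equiv> mu^2 + 3*mu*delta + mu*lam + 2*lam*delta"
    and "s \<equiv> sqrt (12 * mu^2 + delta^2 + 9 * lam^2 - 4 * mu * delta + 20 * mu * lam - 2 * lam * delta)"
  shows "D > 0" "T > 0" "s^2 = T^2 - 4*D" "s \<ge> 0" "s < T"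
proof -
  have p: "mu + 2*delta > 0" using assms by simp
  have "lam * (mu + 2*delta) > - (mu * (mu + 3 * delta))"
    using assms(3) p by (simp add: field_simps)
  then show D: "D > 0" unfolding D_def by (simp add: algebra_simps power2_eq_square)
  have "(4*mu+delta) * (mu + 2*delta) - 3 * (mu * (mu + 3 * delta)) = mu^2 + 2*delta^2"
    by (simp add: algebra_simps power2_eq_square)
  moreover have "mu^2 + 2*delta^2 > 0" using assms(2) by (simp add: add_nonneg_pos)
  ultimately have "3 * (mu * (mu + 3 * delta)) < (4*mu+delta) * (mu + 2*delta)" by linarith
  then have "mu * (mu + 3 * delta) / (mu + 2 * delta) < (4*mu+delta)/3"
    using p by (simp add: field_simps)
  then have "lam > -(4*mu+delta)/3" using assms(3) by linarith
  then show T: "T > 0" unfolding T_def by (simp add: field_simps)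
  have e: "12 * mu^2 + delta^2 + 9 * lam^2 - 4 * mu * delta + 20 * mu * lam - 2 * lam * delta = T^2 - 4*D"
    unfolding T_def D_def by (simp add: algebra_simps power2_eq_square)
  have e2: "T^2 - 4*D = (2*mu+lam-delta)^2 + 8*(mu+lam)^2"
    unfolding T_def D_def by (simp add: algebra_simps power2_eq_square)
  have nn: "T^2 - 4*D \<ge> 0" unfolding e2 by simp
  have nn': "0 \<le> 12 * mu^2 + delta^2 + 9 * lam^2 - 4 * mu * delta + 20 * mu * lam - 2 * lam * delta"
    using e nn by linarith
  have "s^2 = 12 * mu^2 + delta^2 + 9 * lam^2 - 4 * mu * delta + 20 * mu * lam - 2 * lam * delta"
    unfolding s_def by (rule real_sqrt_pow2[OF nn'])
  then show "s^2 = T^2 - 4*D" using e by simp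
  show "s \<ge> 0" unfolding s_def by (rule real_sqrt_ge_zero[OF nn'])
  have "s^2 < T^2" using \<open>s^2 = T^2 - 4*D\<close> D by simp
  then show "s < T" using T \<open>s \<ge> 0\<close> by (smt (verit) power_mono)
qed

lemma diag_ineq:
  fixes mu delta lam b a1 a2 a3 :: real
  assumes "mu \<ge> delta" and "b \<le> delta"
    and "(b - (T - s)/2) * (b - (T + s)/2) \<ge> 0" "b \<le> (T - s)/2" "s \<ge> 0"
    and "T = 4 * mu + delta + 3 * lam"
    and "s^2 = T^2 - 4*(mu^2 + 3*mu*delta + mu*lam + 2*lam*delta)"
  shows "b * (a1^2 + a2^2 + a3^2) \<le> mu * (a1^2+a2^2) + delta * a3^2 + (mu+lam) * (a1+a2+a3)^2"
proof -
  define A where "A = 3*mu + 2*lam"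
  define C where "C = delta + mu + lam"
  have q: "(b - (T - s)/2) * (b - (T + s)/2) = b^2 - T*b + (T^2 - s^2)/4"
    by (simp add: algebra_simps power2_eq_square field_simps)
  define D where "D = mu^2 + 3*mu*delta + mu*lam + 2*lam*delta"
  have "b^2 - T*b + (T^2 - s^2)/4 \<ge> 0" using assms(3) q by simp
  moreover have "(T^2 - s^2)/4 = D" using assms(7) unfolding D_def by simp
  ultimately have h: "b^2 - T*b + D \<ge> 0" by simp
  have "(A - b) * (C - b) - 2*(mu+lam)^2 = b^2 - T*b + D"
    unfolding A_def C_def D_def assms(6) by (simp add: algebra_simps power2_eq_square)
  then have prod: "(A - b) * (C - b) \<ge> 2*(mu+lam)^2" using h by linarith
  have sum: "(A - b) + (C - b) \<ge> 0" using assms(4,5,6) unfolding A_def C_def by simp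
  have z: "2*(mu+lam)^2 \<ge> 0" by simp
  have Ab: "A - b \<ge> 0"
  proof (rule ccontr)
    assume n: "\<not> ?thesis"
    then have "C - b > 0" using sum by linarith
    then have "(A-b)*(C-b) < 0" using n by (simp add: mult_neg_pos)
    then show False using prod z by linarith
  qed
  have Cb: "C - b \<ge> 0"
  proof (rule ccontr)
    assume n: "\<not> ?thesis"
    then have "A - b > 0" using sum by linarith
    then have "(A-b)*(C-b) < 0" using n by (simp add: mult_pos_neg)
    then show False using prod z by linarith
  qed
  define p where "p = (a1+a2)/2"
  define r where "r = (a1-a2)/2"
  have a1: "a1 = p + r" unfolding p_def r_def by (simp add: field_simps)
  have a2: "a2 = p - r" unfolding p_def r_def by (simp add: field_simps)
  have mb: "mu - b \<ge> 0" using assms by simp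
  have form: "mu * (a1^2+a2^2) + delta * a3^2 + (mu+lam) * (a1+a2+a3)^2 - b * (a1^2 + a2^2 + a3^2)
     = 2*(mu-b)*r^2 + (2*(A-b)*p^2 + 4*(mu+lam)*p*a3 + (C-b)*a3^2)"
    unfolding a1 a2 A_def C_def by (simp add: algebra_simps power2_eq_square)
  have quad: "2*(A-b)*p^2 + 4*(mu+lam)*p*a3 + (C-b)*a3^2 \<ge> 0"
  proof (cases "A - b = 0")
    case True
    then have "(mu + lam)^2 \<le> 0" using prod by simp
    then have "mu + lam = 0" by simp
    then show ?thesis using True Cb by simp
  next
    case False
    then have Ap: "A - b > 0" using Ab by simp
    have "(A-b) * (2*(A-b)*p^2 + 4*(mu+lam)*p*a3 + (C-b)*a3^2)
        = 2*((A-b)*p + (mu+lam)*a3)^2 + ((A-b)*(C-b) - 2*(mu+lam)^2)*a3^2"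
      by (simp add: algebra_simps power2_eq_square)
    also have "\<dots> \<ge> 0" using prod by simp
    finally show ?thesis using Ap by (simp add: zero_le_mult_iff)
  qed
  have "2*(mu-b)*r^2 \<ge> 0" using mb by simp
  then show ?thesis using form quad by linarith
qed

lemma coef: "b \<le> c \<Longrightarrow> b * (x::real)^2 \<le> c * x^2"
  by (simp add: mult_right_mono)

theorem corollary2p2:
  fixes mu delta lam :: real and U :: "(real^3) set" and u :: "real^3 \<Rightarrow> real^3"
  assumes "mu \<ge> delta" and "delta > 0"
    and "lam > - (mu * (mu + 3 * delta) / (mu + 2 * delta))"
    and "open U" and "u differentiable_on U"
  shows "let \<beta> = min delta ((4 * mu + delta + 3 * lam
             - sqrt (12 * mu^2 + delta^2 + 9 * lam^2 - 4 * mu * delta + 20 * mu * lam - 2 * lam * delta)) / 2)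
         in \<beta> > 0 \<and>
            (\<forall>y\<in>U. \<beta> * grad_y_sq u y
               \<le> mu * grad_x_sq u y + delta * dz_sq u y + (mu + lam) * (div_y u y)^2)"
proof -
  define T where "T = 4 * mu + delta + 3 * lam"
  define D where "D = mu^2 + 3*mu*delta + mu*lam + 2*lam*delta"
  define s where "s = sqrt (12 * mu^2 + delta^2 + 9 * lam^2 - 4 * mu * delta + 20 * mu * lam - 2 * lam * delta)"
  note bf = beta_facts[OF assms(1,2,3), folded T_def D_def s_def]
  define b where "b = min delta ((T - s)/2)"
  have bpos: "b > 0" unfolding b_def using bf assms(2) by simp
  have bd: "b \<le> delta" unfolding b_def by simp
  have bm: "b \<le> (T - s)/2" unfolding b_def by (rule min.cobounded2)
  have f1: "b - (T - s)/2 \<le> 0" using bm by simp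
  have f2: "b - (T + s)/2 \<le> 0" using bm bf by simp
  have pr: "(b - (T - s)/2) * (b - (T + s)/2) \<ge> 0" using f1 f2 by (simp add: mult_nonpos_nonpos)
  have bmu: "b \<le> mu" using bd assms(1) by simp
  have main: "b * grad_y_sq u y \<le> mu * grad_x_sq u y + delta * dz_sq u y + (mu + lam) * (div_y u y)^2" for y
  proof -
    define J where "J = jacobian u (at y)"
    have dg: "b * ((J$1$1)^2 + (J$2$2)^2 + (J$3$3)^2) \<le> mu * ((J$1$1)^2+(J$2$2)^2) + delta * (J$3$3)^2
       + (mu+lam) * (J$1$1+J$2$2+J$3$3)^2"
      by (rule diag_ineq[OF assms(1) bd pr bm bf(4) T_def]) (use bf(3) D_def in simp)
    have o1: "b * (J$2$1)^2 \<le> mu * (J$2$1)^2" by (rule coef[OF bmu])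
    have o2: "b * (J$3$1)^2 \<le> mu * (J$3$1)^2" by (rule coef[OF bmu])
    have o3: "b * (J$1$2)^2 \<le> mu * (J$1$2)^2" by (rule coef[OF bmu])
    have o4: "b * (J$3$2)^2 \<le> mu * (J$3$2)^2" by (rule coef[OF bmu])
    have o5: "b * (J$1$3)^2 \<le> delta * (J$1$3)^2" by (rule coef[OF bd])
    have o6: "b * (J$2$3)^2 \<le> delta * (J$2$3)^2" by (rule coef[OF bd])
    have "grad_y_sq u y = (J$1$1)^2 + (J$2$1)^2 + (J$3$1)^2 + (J$1$2)^2 + (J$2$2)^2 + (J$3$2)^2
        + (J$1$3)^2 + (J$2$3)^2 + (J$3$3)^2"
      unfolding grad_y_sq_def J_def[symmetric] by (simp add: sum_3)
    moreover have "grad_x_sq u y = (J$1$1)^2 + (J$2$1)^2 + (J$3$1)^2 + (J$1$2)^2 + (J$2$2)^2 + (J$3$2)^2"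
      unfolding grad_x_sq_def J_def[symmetric] by (simp add: sum_3)
    moreover have "dz_sq u y = (J$1$3)^2 + (J$2$3)^2 + (J$3$3)^2"
      unfolding dz_sq_def J_def[symmetric] by (simp add: sum_3)
    moreover have "div_y u y = J$1$1+J$2$2+J$3$3"
      unfolding div_y_def J_def[symmetric] trace_def by (simp add: sum_3)
    ultimately show ?thesis using dg o1 o2 o3 o4 o5 o6 by (simp add: algebra_simps)
  qed
  show ?thesis unfolding Let_def b_def[symmetric] T_def[symmetric] s_def[symmetric]
    using bpos main by simp
qed

end
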